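(* Let $A\in\mathbb{Z}^{m\times n}$ have full column rank, let $x^*\in\mathbb{R}^n$, let $y^*\in S(A,x^* )$, let $k:=\dim S(A,y^* )$, and fix $d\in\{1,\dots,k\}$. Then there exists a $d$-dimensional face of $S(A,y^* )$ containing $y^*$ that intersects some $(k-d)$-dimensional face of $S(A,y^* )$ containing $0$.
   Context: With rows $a_1^\top,\dots,a_m^\top$ of $A$, for $x^*\in\mathbb{R}^n$ define the cone $C(A,x^* )=\{x\in\mathbb{R}^n: \operatorname{sign}(a_i^\top x^* )\,a_i^\top x\ge 0 \text{ for all } i \text{ with } a_i^\top x^*\neq 0;\ a_i^\top x=0 \text{ for all } i \text{ with } a_i^\top x^*=0\}$ and the polytope (spindle) $S(A,x^* )=C(A,x^* )\cap(x^*-C(A,x^* ))$. *)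

theory Defs
  imports "HOL-Analysis.Analysis"
begin

definition cone_C :: "real^'n^'m \<Rightarrow> real^'n \<Rightarrow> (real^'n) set" where
  "cone_C A xs = {x. \<forall>i. (A$i \<bullet> xs \<noteq> 0 \<longrightarrow> sgn (A$i \<bullet> xs) * (A$i \<bullet> x) \<ge> 0)
                       \<and> (A$i \<bullet> xs = 0 \<longrightarrow> A$i \<bullet> x = 0)}"

definition spindle :: "real^'n^'m \<Rightarrow> real^'n \<Rightarrow> (real^'n) set" where
  "spindle A xs = cone_C A xs \<inter> (\<lambda>c. xs - c) ` cone_C A xs"

end

theory Submission
  imports Defs
begin


definition polyP :: "('j \<Rightarrow> 'a::euclidean_space) \<Rightarrow> ('j \<Rightarrow> real) \<Rightarrow> 'a set" where
  "polyP g b = {x. \<forall>j. g j \<bullet> x \<le> b j}"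

definition dirsP :: "('j \<Rightarrow> 'a::euclidean_space) \<Rightarrow> ('j \<Rightarrow> real) \<Rightarrow> 'a \<Rightarrow> 'a set" where
  "dirsP g b x = {u. \<forall>j. g j \<bullet> x = b j \<longrightarrow> g j \<bullet> u = 0}"

lemma subspace_dirsP: "subspace (dirsP g b x)"
  unfolding subspace_def dirsP_def by (auto simp: inner_add_right)

lemma closed_polyP: "closed (polyP g b)"
proof -
  have "polyP g b = (\<Inter>j. {x. g j \<bullet> x \<le> b j})" by (auto simp: polyP_def)
  then show ?thesis by (simp add: closed_INT closed_halfspace_le)
qed

lemma block_step:
  fixes g :: "'j::finite \<Rightarrow> 'a::euclidean_space"
  assumes x: "x \<in> polyP g b" and u: "u \<in> dirsP g b x" and j0: "g j0 \<bullet> u > 0"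
  shows "\<exists>t>0. x + t *\<^sub>R u \<in> polyP g b \<and> (\<exists>j. g j \<bullet> u > 0 \<and> g j \<bullet> (x + t *\<^sub>R u) = b j)"
proof -
  define Q where "Q = {j. g j \<bullet> u > 0}"
  define f where "f j = (b j - g j \<bullet> x) / (g j \<bullet> u)" for j
  have Qne: "Q \<noteq> {}" using j0 Q_def by auto
  have fin: "finite (f ` Q)" by simp
  define t where "t = Min (f ` Q)"
  obtain j1 where j1: "j1 \<in> Q" "t = f j1"
    using Min_in[OF fin] Qne t_def by fastforce
  have tle: "t \<le> f j" if "j \<in> Q" for j using that t_def fin by simp
  have pos: "f j > 0" if "j \<in> Q" for j
  proof -
    have "g j \<bullet> x \<noteq> b j" using that u Q_def by (auto simp: dirsP_def)
    moreover have "g j \<bullet> x \<le> b j" using x by (simp add: polyP_def)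
    ultimately show ?thesis using that by (simp add: f_def Q_def)
  qed
  have tpos: "t > 0" using pos j1 by simp
  have "x + t *\<^sub>R u \<in> polyP g b"
    unfolding polyP_def
  proof (safe)
    fix j
    show "g j \<bullet> (x + t *\<^sub>R u) \<le> b j"
    proof (cases "j \<in> Q")
      case True
      then have gu: "g j \<bullet> u > 0" by (simp add: Q_def)
      have "t * (g j \<bullet> u) \<le> f j * (g j \<bullet> u)" using tle[OF True] gu by (simp add: mult_right_mono)
      also have "\<dots> = b j - g j \<bullet> x" using gu by (simp add: f_def)
      finally show ?thesis by (simp add: inner_add_right algebra_simps)
    next
      case False
      then have "g j \<bullet> u \<le> 0" by (simp add: Q_def)
      then have "t * (g j \<bullet> u) \<le> 0" using tpos by (simp add: mult_nonneg_nonpos)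
      moreover have "g j \<bullet> x \<le> b j" using x by (simp add: polyP_def)
      ultimately show ?thesis by (simp add: inner_add_right)
    qed
  qed
  moreover have "g j1 \<bullet> (x + t *\<^sub>R u) = b j1"
    using j1 by (simp add: Q_def f_def inner_add_right)
  ultimately show ?thesis using tpos j1 Q_def by blast
qed

lemma small_step:
  fixes g :: "'j::finite \<Rightarrow> 'a::euclidean_space"
  assumes x: "x \<in> polyP g b" and u: "u \<in> dirsP g b x"
  shows "\<exists>t>0. x + t *\<^sub>R u \<in> polyP g b"
proof (cases "\<exists>j. g j \<bullet> u > 0")
  case True
  then show ?thesis using block_step[OF x u] by blast
next
  case False
  have "g j \<bullet> (x + 1 *\<^sub>R u) \<le> b j" for j
  proof -
    have "g j \<bullet> u \<le> 0" using False by (simp add: not_less)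
    moreover have "g j \<bullet> x \<le> b j" using x by (simp add: polyP_def)
    ultimately show ?thesis by (simp add: inner_add_right)
  qed
  then have "x + 1 *\<^sub>R u \<in> polyP g b" by (simp add: polyP_def)
  then show ?thesis by (rule_tac x=1 in exI) simp
qed

lemma vertex_max:
  fixes g :: "'j::finite \<Rightarrow> 'a::euclidean_space"
  assumes bd: "bounded (polyP g b)" and ne: "polyP g b \<noteq> {}"
    and full: "\<And>u. (\<forall>j. g j \<bullet> u = 0) \<Longrightarrow> u = 0"
  shows "\<exists>x\<in>polyP g b. (\<forall>z\<in>polyP g b. c \<bullet> z \<le> c \<bullet> x) \<and> dirsP g b x = {0}"
proof -
  have cpt: "compact (polyP g b)" using bd closed_polyP by (simp add: compact_eq_bounded_closed)
  have cont: "continuous_on (polyP g b) (\<lambda>x. c \<bullet> x)" by (intro continuous_intros)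
  obtain x0 where x0: "x0 \<in> polyP g b" "\<forall>z\<in>polyP g b. c \<bullet> z \<le> c \<bullet> x0"
    using continuous_attains_sup[OF cpt ne cont] by blast
  define M where "M = {x \<in> polyP g b. c \<bullet> x = c \<bullet> x0}"
  have "x0 \<in> M" using x0 M_def by simp
  then obtain x where xM: "x \<in> M" and xmin: "\<forall>z. z \<in> M \<longrightarrow> dim (dirsP g b x) \<le> dim (dirsP g b z)"
    using ex_has_least_nat[of "\<lambda>z. z \<in> M" x0 "\<lambda>z. dim (dirsP g b z)"] by blast
  have xP: "x \<in> polyP g b" and xc: "c \<bullet> x = c \<bullet> x0" using xM M_def by auto
  have "dirsP g b x = {0}"
  proof (rule ccontr)
    assume "dirsP g b x \<noteq> {0}"
    moreover have "0 \<in> dirsP g b x" by (simp add: dirsP_def)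
    ultimately obtain u where u: "u \<in> dirsP g b x" "u \<noteq> 0" by blast
    have neg: "- v \<in> dirsP g b x" if "v \<in> dirsP g b x" for v
      using that by (simp add: dirsP_def)
    have cu: "c \<bullet> u = 0"
    proof (rule ccontr)
      assume "c \<bullet> u \<noteq> 0"
      define u' where "u' = (if c \<bullet> u > 0 then u else - u)"
      have u': "u' \<in> dirsP g b x" "c \<bullet> u' > 0"
        using u neg \<open>c \<bullet> u \<noteq> 0\<close> by (auto simp: u'_def)
      obtain t where t: "t > 0" "x + t *\<^sub>R u' \<in> polyP g b" using small_step[OF xP u'(1)] by blast
      have "c \<bullet> (x + t *\<^sub>R u') > c \<bullet> x" using t u' by (simp add: inner_add_right)
      then show False using x0(2) t(2) xc by force
    qed
    obtain j0 where "g j0 \<bullet> u \<noteq> 0" using full u(2) by blast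
    define v where "v = (if g j0 \<bullet> u > 0 then u else - u)"
    have v: "v \<in> dirsP g b x" "g j0 \<bullet> v > 0" "c \<bullet> v = 0" "v \<noteq> 0"
      using u neg cu \<open>g j0 \<bullet> u \<noteq> 0\<close> by (auto simp: v_def)
    obtain t j where t: "t > 0" "x + t *\<^sub>R v \<in> polyP g b" "g j \<bullet> v > 0" "g j \<bullet> (x + t *\<^sub>R v) = b j"
      using block_step[OF xP v(1,2)] by blast
    define x' where "x' = x + t *\<^sub>R v"
    have "x' \<in> M" using t v xc by (simp add: M_def x'_def inner_add_right)
    have sub: "dirsP g b x' \<subseteq> dirsP g b x"
    proof
      fix w assume w: "w \<in> dirsP g b x'"
      show "w \<in> dirsP g b x"
        unfolding dirsP_def
      proof safe
        fix i assume "g i \<bullet> x = b i"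
        moreover have "g i \<bullet> v = 0" using v(1) calculation by (simp add: dirsP_def)
        ultimately have "g i \<bullet> x' = b i" by (simp add: x'_def inner_add_right)
        then show "g i \<bullet> w = 0" using w by (simp add: dirsP_def)
      qed
    qed
    have "v \<notin> dirsP g b x'" using t unfolding dirsP_def x'_def by force
    then have "dirsP g b x' \<subset> dirsP g b x" using sub v(1) by blast
    then have "dim (dirsP g b x') < dim (dirsP g b x)"
      by (metis dim_psubset span_eq_iff subspace_dirsP)
    then show False using xmin \<open>x' \<in> M\<close> by force
  qed
  then show ?thesis using xP x0 xc by (metis (no_types, lifting))
qed



definition SP :: "real^'n^'m \<Rightarrow> real^'n \<Rightarrow> (real^'n) set" where
  "SP A y = {x. \<forall>i. min 0 (A$i \<bullet> y) \<le> A$i \<bullet> x \<and> A$i \<bullet> x \<le> max 0 (A$i \<bullet> y)}"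

lemma sp_real:
  fixes r s :: real
  shows "(((r \<noteq> 0 \<longrightarrow> sgn r * s \<ge> 0) \<and> (r = 0 \<longrightarrow> s = 0)) \<and> ((r \<noteq> 0 \<longrightarrow> sgn r * (r - s) \<ge> 0) \<and> (r = 0 \<longrightarrow> r - s = 0)))
     \<longleftrightarrow> (min 0 r \<le> s \<and> s \<le> max 0 r)"
  by (cases "r > 0"; cases "r < 0"; simp; auto)

lemma spindle_eq: "spindle A y = SP A y"
proof -
  have "x \<in> spindle A y \<longleftrightarrow> x \<in> SP A y" for x
  proof -
    have im: "x \<in> (\<lambda>c. y - c) ` cone_C A y \<longleftrightarrow> y - x \<in> cone_C A y"
    proof
      assume "x \<in> (\<lambda>c. y - c) ` cone_C A y"
      then obtain c where "c \<in> cone_C A y" "x = y - c" by blast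
      then show "y - x \<in> cone_C A y" by simp
    next
      assume "y - x \<in> cone_C A y"
      then have "y - (y - x) \<in> (\<lambda>c. y - c) ` cone_C A y" by (rule imageI)
      then show "x \<in> (\<lambda>c. y - c) ` cone_C A y" by simp
    qed
    have "x \<in> spindle A y \<longleftrightarrow> (\<forall>i. ((A$i \<bullet> y \<noteq> 0 \<longrightarrow> sgn (A$i \<bullet> y) * (A$i \<bullet> x) \<ge> 0) \<and> (A$i \<bullet> y = 0 \<longrightarrow> A$i \<bullet> x = 0))
       \<and> ((A$i \<bullet> y \<noteq> 0 \<longrightarrow> sgn (A$i \<bullet> y) * (A$i \<bullet> y - A$i \<bullet> x) \<ge> 0) \<and> (A$i \<bullet> y = 0 \<longrightarrow> A$i \<bullet> y - A$i \<bullet> x = 0)))"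
      unfolding spindle_def Int_iff im unfolding cone_C_def mem_Collect_eq inner_diff_right all_conj_distrib ..
    also have "\<dots> \<longleftrightarrow> x \<in> SP A y"
      unfolding SP_def mem_Collect_eq by (rule all_cong1) (rule sp_real)
    finally show ?thesis .
  qed
  then show ?thesis by blast
qed

lemma row_inner: "(A *v x) $ i = A$i \<bullet> x"
  by (simp add: matrix_vector_mult_def inner_vec_def mult.commute)

lemma full_rank_zero:
  fixes A :: "real^'n^'m"
  assumes "rank A = CARD('n)" and "\<forall>i. A$i \<bullet> u = 0"
  shows "u = 0"
proof -
  have inj: "inj ((*v) A)" using assms(1) full_rank_injective by blast
  have "A *v u = A *v 0" using assms(2) by (simp add: vec_eq_iff row_inner)
  then show ?thesis using inj by (meson injD)
qed

lemma bounded_rows: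
  fixes A :: "real^'n^'m"
  assumes "rank A = CARD('n)"
  shows "bounded {x. \<forall>i. \<bar>A$i \<bullet> x\<bar> \<le> B}"
proof -
  have inj: "inj ((*v) A)" using assms(1) full_rank_injective by blast
  obtain g where g: "linear g" "g \<circ> (*v) A = id"
    using linear_injective_left_inverse[OF _ inj] by (metis matrix_vector_mul_linear)
  define K where "K = {x. \<forall>i. \<bar>A$i \<bullet> x\<bar> \<le> B}"
  have "(*v) A ` K \<subseteq> cbox (- (\<chi> i. B)) (\<chi> i. B)"
    by (auto simp: K_def mem_box_cart row_inner abs_le_iff) (meson minus_le_iff)
  then have "bounded ((*v) A ` K)" by (meson bounded_cbox bounded_subset)
  then have "bounded (g ` (*v) A ` K)" using g(1) by (simp add: bounded_linear_image linear_conv_bounded_linear)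
  moreover have "g ` (*v) A ` K = K" using g(2)
    by (simp add: image_comp)
  ultimately show ?thesis by (simp add: K_def)
qed

definition NN :: "real^'n^'m \<Rightarrow> 'm set \<Rightarrow> (real^'n) set" where
  "NN A T = {v. \<forall>i\<in>T. A$i \<bullet> v = 0}"
definition T1 :: "real^'n^'m \<Rightarrow> real^'n \<Rightarrow> real^'n \<Rightarrow> 'm set" where
  "T1 A y x = {i. A$i \<bullet> x = A$i \<bullet> y}"
definition T0 :: "real^'n^'m \<Rightarrow> real^'n \<Rightarrow> 'm set" where
  "T0 A x = {i. A$i \<bullet> x = 0}"

lemma subspace_NN: "subspace (NN A T)"
  unfolding subspace_def NN_def by (auto simp: inner_add_right)

lemma NN_anti: "T \<subseteq> U \<Longrightarrow> NN A U \<subseteq> NN A T"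
  unfolding NN_def by auto

lemma NN_Un: "NN A (T \<union> U) = NN A T \<inter> NN A U"
  unfolding NN_def by auto

lemma NN_UNIV:
  fixes A :: "real^'n^'m"
  assumes "rank A = CARD('n)" shows "NN A UNIV = {0}"
proof -
  have "u = 0" if "u \<in> NN A UNIV" for u using full_rank_zero[OF assms] that by (simp add: NN_def)
  then show ?thesis by (auto simp: NN_def)
qed

definition gB :: "real^'n^'m \<Rightarrow> bool \<times> 'm \<Rightarrow> real^'n" where
  "gB A j = (if fst j then A$(snd j) else - A$(snd j))"
definition bB :: "('m \<Rightarrow> real) \<Rightarrow> ('m \<Rightarrow> real) \<Rightarrow> bool \<times> 'm \<Rightarrow> real" where
  "bB lo hi j = (if fst j then hi (snd j) else - lo (snd j))"

lemma polyP_box: "polyP (gB A) (bB lo hi) = {x. \<forall>i. lo i \<le> A$i \<bullet> x \<and> A$i \<bullet> x \<le> hi i}"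
proof -
  have "(\<forall>j. gB A j \<bullet> x \<le> bB lo hi j) \<longleftrightarrow> (\<forall>i. lo i \<le> A$i \<bullet> x \<and> A$i \<bullet> x \<le> hi i)" for x
  proof
    assume "\<forall>j. gB A j \<bullet> x \<le> bB lo hi j"
    then show "\<forall>i. lo i \<le> A$i \<bullet> x \<and> A$i \<bullet> x \<le> hi i"
      by (metis (no_types, lifting) bB_def fst_conv gB_def inner_minus_left neg_le_iff_le snd_conv)
  next
    assume "\<forall>i. lo i \<le> A$i \<bullet> x \<and> A$i \<bullet> x \<le> hi i"
    then show "\<forall>j. gB A j \<bullet> x \<le> bB lo hi j"
      by (auto simp: bB_def gB_def)
  qed
  then show ?thesis by (simp add: polyP_def)
qed

lemma SP_box: "SP A y = polyP (gB A) (bB (\<lambda>i. min 0 (A$i \<bullet> y)) (\<lambda>i. max 0 (A$i \<bullet> y)))"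
  by (simp add: polyP_box SP_def)

lemma dirs_box:
  assumes "\<forall>i. lo i \<in> {0, A$i \<bullet> y} \<and> hi i \<in> {0, A$i \<bullet> y}"
  shows "NN A (T1 A y x \<union> T0 A x) \<subseteq> dirsP (gB A) (bB lo hi) x"
proof
  fix u assume u: "u \<in> NN A (T1 A y x \<union> T0 A x)"
  show "u \<in> dirsP (gB A) (bB lo hi) x"
    unfolding dirsP_def
  proof (safe)
    fix b i assume t: "gB A (b, i) \<bullet> x = bB lo hi (b, i)"
    have "A$i \<bullet> x = hi i \<or> A$i \<bullet> x = lo i" using t by (cases b) (auto simp: gB_def bB_def)
    then have "i \<in> T1 A y x \<union> T0 A x" using assms by (auto simp: T1_def T0_def)
    then have "A$i \<bullet> u = 0" using u by (simp add: NN_def)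
    then show "gB A (b, i) \<bullet> u = 0" by (simp add: gB_def)
  qed
qed

lemma SP_bounded:
  fixes A :: "real^'n^'m"
  assumes r: "rank A = CARD('n)" shows "bounded (SP A y)"
proof -
  have "SP A y \<subseteq> {x. \<forall>i. \<bar>A$i \<bullet> x\<bar> \<le> (\<Sum>j\<in>UNIV. \<bar>A$j \<bullet> y\<bar>)}"
  proof safe
    fix x i assume "x \<in> SP A y"
    then have "min 0 (A$i \<bullet> y) \<le> A$i \<bullet> x \<and> A$i \<bullet> x \<le> max 0 (A$i \<bullet> y)" by (simp add: SP_def)
    then have "\<bar>A$i \<bullet> x\<bar> \<le> \<bar>A$i \<bullet> y\<bar>" by (auto simp: min_def max_def split: if_splits)
    also have "\<dots> \<le> (\<Sum>j\<in>UNIV. \<bar>A$j \<bullet> y\<bar>)" by (rule member_le_sum) auto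
    finally show "\<bar>A$i \<bullet> x\<bar> \<le> (\<Sum>j\<in>UNIV. \<bar>A$j \<bullet> y\<bar>)" .
  qed
  then show ?thesis using bounded_rows[OF r] bounded_subset by blast
qed

lemma SP_convex: "convex (SP A y)"
proof -
  have "SP A y = (\<Inter>i. {x. min 0 (A$i \<bullet> y) \<le> A$i \<bullet> x} \<inter> {x. A$i \<bullet> x \<le> max 0 (A$i \<bullet> y)})"
    by (auto simp: SP_def)
  then show ?thesis by (simp add: convex_INT convex_Int convex_halfspace_le convex_halfspace_ge)
qed

lemma SP_closed: "closed (SP A y)"
  by (simp add: SP_box closed_polyP)

lemma SP_polyhedron: "polyhedron (SP A y)"
proof -
  have "SP A y = \<Inter> (range (\<lambda>i. {x. min 0 (A$i \<bullet> y) \<le> A$i \<bullet> x} \<inter> {x. A$i \<bullet> x \<le> max 0 (A$i \<bullet> y)}))"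
    by (auto simp: SP_def)
  then show ?thesis
    by (auto intro!: polyhedron_Inter polyhedron_Int polyhedron_halfspace_le polyhedron_halfspace_ge)
qed

lemma SP_term:
  assumes "x \<in> SP A y"
  shows "0 \<le> (A$i \<bullet> y) * (A$i \<bullet> x)" "(A$i \<bullet> y) * (A$i \<bullet> x) \<le> (A$i \<bullet> y) * (A$i \<bullet> y)"
    "A$i \<bullet> y = 0 \<Longrightarrow> A$i \<bullet> x = 0"
proof -
  have h: "min 0 (A$i \<bullet> y) \<le> A$i \<bullet> x" "A$i \<bullet> x \<le> max 0 (A$i \<bullet> y)" using assms by (auto simp: SP_def)
  show "0 \<le> (A$i \<bullet> y) * (A$i \<bullet> x)"
    using h by (cases "A$i \<bullet> y \<ge> 0") (auto simp: min_def max_def zero_le_mult_iff split: if_splits)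
  show "(A$i \<bullet> y) * (A$i \<bullet> x) \<le> (A$i \<bullet> y) * (A$i \<bullet> y)"
    using h by (cases "A$i \<bullet> y \<ge> 0") (auto simp: min_def max_def mult_left_mono mult_left_mono_neg split: if_splits)
  show "A$i \<bullet> y = 0 \<Longrightarrow> A$i \<bullet> x = 0" using h by auto
qed

lemma SP_aff_dim:
  fixes A :: "real^'n^'m"
  shows "aff_dim (SP A y) = int (dim (NN A (T0 A y)))"
proof -
  define N0 where "N0 = NN A (T0 A y)"
  have sub: "SP A y \<subseteq> N0"
    using SP_term(3) by (auto simp: N0_def NN_def T0_def)
  have le: "aff_dim (SP A y) \<le> int (dim N0)"
    using aff_dim_subset[OF sub] aff_dim_subspace[OF subspace_NN[of A "T0 A y"]] by (simp add: N0_def)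
  define a where "a = (1/2) *\<^sub>R y"
  have aS: "a \<in> SP A y"
    by (auto simp: SP_def a_def min_def max_def)
  have eq: "aff_dim (SP A y) = int (dim ((+) (- a) ` SP A y))"
    using aff_dim_eq_dim[of a "SP A y"] aS by (simp add: hull_inc)
  have "N0 \<subseteq> span ((+) (- a) ` SP A y)"
  proof
    fix v assume v: "v \<in> N0"
    define K where "K = 1 + (\<Sum>i\<in>UNIV. \<bar>A$i \<bullet> v\<bar> / \<bar>A$i \<bullet> y\<bar>)"
    have K1: "K \<ge> 1" unfolding K_def by (simp add: sum_nonneg)
    define t where "t = 1 / (2 * K)"
    have tpos: "t > 0" using K1 by (simp add: t_def)
    have "a + t *\<^sub>R v \<in> SP A y"
      unfolding SP_def mem_Collect_eq
    proof
      fix i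
      show "min 0 (A$i \<bullet> y) \<le> A$i \<bullet> (a + t *\<^sub>R v) \<and> A$i \<bullet> (a + t *\<^sub>R v) \<le> max 0 (A$i \<bullet> y)"
      proof (cases "A$i \<bullet> y = 0")
        case True
        then have "A$i \<bullet> v = 0" using v by (simp add: N0_def NN_def T0_def)
        then show ?thesis using True by (simp add: a_def inner_add_right)
      next
        case False
        have "\<bar>A$i \<bullet> v\<bar> / \<bar>A$i \<bullet> y\<bar> \<le> (\<Sum>i\<in>UNIV. \<bar>A$i \<bullet> v\<bar> / \<bar>A$i \<bullet> y\<bar>)"
          by (rule member_le_sum) auto
        then have "\<bar>A$i \<bullet> v\<bar> / \<bar>A$i \<bullet> y\<bar> \<le> K" by (simp add: K_def)
        then have "\<bar>A$i \<bullet> v\<bar> \<le> K * \<bar>A$i \<bullet> y\<bar>" using False by (simp add: divide_le_eq)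
        then have "\<bar>t * (A$i \<bullet> v)\<bar> \<le> \<bar>A$i \<bullet> y\<bar> / 2"
          using K1 tpos by (simp add: t_def abs_mult field_simps)
        then show ?thesis
          by (auto simp: a_def inner_add_right min_def max_def abs_le_iff split: if_splits)
      qed
    qed
    then have "t *\<^sub>R v \<in> (+) (- a) ` SP A y"
      by (metis (no_types, lifting) add_diff_cancel_left' diff_minus_eq_add image_eqI minus_add_cancel uminus_add_conv_diff)
    then have "(1/t) *\<^sub>R (t *\<^sub>R v) \<in> span ((+) (- a) ` SP A y)"
      by (intro span_mul span_base)
    then show "v \<in> span ((+) (- a) ` SP A y)" using tpos by simp
  qed
  then have "dim N0 \<le> dim ((+) (- a) ` SP A y)"
    by (metis dim_span dim_subset)
  then show ?thesis using le eq by (simp add: N0_def)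
qed

lemma face_enlarge:
  fixes S :: "'a::euclidean_space set"
  assumes "polytope S" "F face_of S" "F \<noteq> {}" "aff_dim F \<le> e" "e \<le> aff_dim S"
  shows "\<exists>G. G face_of S \<and> F \<subseteq> G \<and> aff_dim G = e"
  using assms
proof (induction "nat (aff_dim S - e)" arbitrary: S)
  case 0
  then have "aff_dim S = e" by simp
  then show ?case using 0 face_of_refl polytope_imp_convex face_of_imp_subset by blast
next
  case (Suc m)
  then have lt: "e < aff_dim S" by simp
  have "F \<noteq> S" using Suc.prems lt by auto
  then obtain H where H: "H facet_of S" "F \<subseteq> H"
    using face_of_polyhedron_subset_facet[OF polytope_imp_polyhedron[OF Suc.prems(1)] Suc.prems(2,3)] by blast
  have Hf: "H face_of S" and Hd: "aff_dim H = aff_dim S - 1" using H(1) by (auto simp: facet_of_def)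
  have Hp: "polytope H" using face_of_polytope_polytope Suc.prems(1) Hf by blast
  have FH: "F face_of H" using Suc.prems(2) H(2) Hf face_of_subset face_of_imp_subset by blast
  have "m = nat (aff_dim H - e)" using Suc.hyps(2) Hd by simp
  then obtain G where "G face_of H" "F \<subseteq> G" "aff_dim G = e"
    using Suc.hyps(1)[OF _ Hp FH Suc.prems(3,4)] Hd lt by auto
  then show ?case using face_of_trans Hf by blast
qed

lemma dim_le1:
  fixes U :: "(real^'n) set"
  assumes U: "subspace U" and UH: "U \<inter> {u. a \<bullet> u = 0} \<subseteq> {0}"
  shows "dim U \<le> 1"
proof (cases "a = 0")
  case True
  then have "U \<subseteq> {0}" using UH by auto
  then show ?thesis by (metis dim_eq_0 le_numeral_extra(1) zero_le)
next
  case False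
  define H where "H = {u. a \<bullet> u = 0}"
  have H: "subspace H" by (simp add: H_def subspace_hyperplane)
  have "dim {x + y |x y. x \<in> U \<and> y \<in> H} + dim (U \<inter> H) = dim U + dim H"
    by (rule dim_sums_Int[OF U H])
  moreover have "dim (U \<inter> H) = 0" using UH by (simp add: H_def)
  moreover have "dim H = CARD('n) - 1" using dim_hyperplane[OF False] by (simp add: H_def)
  moreover have "dim {x + y |x y. x \<in> U \<and> y \<in> H} \<le> CARD('n)" by (rule dim_subset_UNIV_cart)
  moreover have "CARD('n) \<ge> 1" by (simp add: Suc_leI)
  ultimately show ?thesis by linarith
qed

lemma Bot_closed: "closed {x::real^'n. \<forall>i\<in>Z. A$i \<bullet> x = 0}"
proof -
  have "{x::real^'n. \<forall>i\<in>Z. A$i \<bullet> x = 0} = (\<Inter>i\<in>Z. {x. A$i \<bullet> x = 0})" by auto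
  then show ?thesis by (simp add: closed_INT closed_hyperplane)
qed


lemma core:
  fixes A :: "real^'n^'m" and y :: "real^'n" and d :: nat
  assumes r: "rank A = CARD('n)" and dk: "d \<le> dim (NN A (T0 A y))"
  shows "\<exists>p\<in>SP A y. dim (NN A (T1 A y p)) \<le> d \<and> dim (NN A (T0 A p)) + d \<le> dim (NN A (T0 A y))"
proof -
  define S where "S = SP A y"
  define k where "k = dim (NN A (T0 A y))"
  define X where "X = {x\<in>S. dim (NN A (T0 A x)) + d \<le> k}"
  define cv where "cv = (\<Sum>i\<in>UNIV. (A$i \<bullet> y) *\<^sub>R A$i)"
  have cv_eq: "cv \<bullet> x = (\<Sum>i\<in>UNIV. (A$i \<bullet> y) * (A$i \<bullet> x))" for x
    by (simp add: cv_def inner_sum_left)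
  have Scpt: "compact S" using SP_bounded[OF r] SP_closed by (simp add: S_def compact_eq_bounded_closed)
  have Sconv: "convex S" by (simp add: S_def SP_convex)
  have ES: "T0 A y \<subseteq> T1 A y x \<inter> T0 A x" if "x \<in> S" for x
    using SP_term(3) that by (auto simp: S_def T0_def T1_def)
  have fullg: "u = 0" if "\<forall>j. gB A j \<bullet> u = 0" for u
  proof -
    have "\<forall>i. A$i \<bullet> u = 0" using that[rule_format, of "(True, _)"] by (simp add: gB_def)
    then show ?thesis using full_rank_zero[OF r] by blast
  qed
  have zeroS: "0 \<in> S" by (simp add: S_def SP_def)
  have "T0 A 0 = UNIV" by (simp add: T0_def)
  then have "NN A (T0 A 0) = {0}" using NN_UNIV[OF r] by simp
  then have zeroX: "0 \<in> X" using zeroS dk by (simp add: X_def k_def)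
  have Xeq: "X = S \<inter> \<Union> ((\<lambda>Z. {x. \<forall>i\<in>Z. A$i \<bullet> x = 0}) ` {Z. dim (NN A Z) + d \<le> k})"
  proof (intro equalityI subsetI)
    fix x assume "x \<in> X"
    then show "x \<in> S \<inter> \<Union> ((\<lambda>Z. {x. \<forall>i\<in>Z. A$i \<bullet> x = 0}) ` {Z. dim (NN A Z) + d \<le> k})"
      by (auto simp: X_def T0_def intro!: bexI[of _ "T0 A x"])
  next
    fix x assume "x \<in> S \<inter> \<Union> ((\<lambda>Z. {x. \<forall>i\<in>Z. A$i \<bullet> x = 0}) ` {Z. dim (NN A Z) + d \<le> k})"
    then obtain Z where Z: "x \<in> S" "dim (NN A Z) + d \<le> k" "\<forall>i\<in>Z. A$i \<bullet> x = 0" by auto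
    then have "Z \<subseteq> T0 A x" by (auto simp: T0_def)
    then have "dim (NN A (T0 A x)) \<le> dim (NN A Z)" by (simp add: NN_anti dim_subset)
    then show "x \<in> X" using Z by (simp add: X_def)
  qed
  have "closed (\<Union> ((\<lambda>Z. {x. \<forall>i\<in>Z. A$i \<bullet> x = 0}) ` {Z. dim (NN A Z) + d \<le> k}))"
    by (intro closed_Union) (auto simp: Bot_closed)
  then have Xcpt: "compact X" using Scpt Xeq by (simp add: compact_Int_closed)
  have Xne: "X \<noteq> {}" using zeroX by blast
  have cont: "continuous_on U (\<lambda>x. cv \<bullet> x)" for U by (intro continuous_intros)
  obtain z0 where z0: "z0 \<in> X" "\<forall>x\<in>X. cv \<bullet> x \<le> cv \<bullet> z0"
    using continuous_attains_sup[OF Xcpt Xne cont] by blast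
  define lo' where "lo' i = (if i \<in> T0 A z0 then 0 else min 0 (A$i \<bullet> y))" for i
  define hi' where "hi' i = (if i \<in> T0 A z0 then 0 else max 0 (A$i \<bullet> y))" for i
  have B1eq: "polyP (gB A) (bB lo' hi') = {x\<in>S. \<forall>i\<in>T0 A z0. A$i \<bullet> x = 0}"
  proof -
    have "z0 \<in> S" using z0 by (simp add: X_def)
    have eq: "(lo' i \<le> A$i \<bullet> x \<and> A$i \<bullet> x \<le> hi' i) \<longleftrightarrow> (min 0 (A$i \<bullet> y) \<le> A$i \<bullet> x \<and> A$i \<bullet> x \<le> max 0 (A$i \<bullet> y)) \<and> (i \<in> T0 A z0 \<longrightarrow> A$i \<bullet> x = 0)" for i x
      by (cases "i \<in> T0 A z0") (auto simp: lo'_def hi'_def)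
    show ?thesis
      unfolding polyP_box S_def SP_def by (simp add: eq all_conj_distrib Ball_def)
  qed
  have B1X: "polyP (gB A) (bB lo' hi') \<subseteq> X"
  proof
    fix x assume "x \<in> polyP (gB A) (bB lo' hi')"
    then have x: "x \<in> S" "\<forall>i\<in>T0 A z0. A$i \<bullet> x = 0" using B1eq by auto
    then have "T0 A z0 \<subseteq> T0 A x" by (auto simp: T0_def)
    then have "dim (NN A (T0 A x)) \<le> dim (NN A (T0 A z0))" by (simp add: NN_anti dim_subset)
    then show "x \<in> X" using x z0 by (simp add: X_def)
  qed
  have z0B1: "z0 \<in> polyP (gB A) (bB lo' hi')" using B1eq z0 by (auto simp: X_def T0_def)
  have B1bd: "bounded (polyP (gB A) (bB lo' hi'))"
    using B1X Xcpt compact_imp_bounded bounded_subset by blast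
  obtain zs where zs: "zs \<in> polyP (gB A) (bB lo' hi')" "\<forall>z\<in>polyP (gB A) (bB lo' hi'). cv \<bullet> z \<le> cv \<bullet> zs"
    "dirsP (gB A) (bB lo' hi') zs = {0}"
    using vertex_max[OF B1bd _ fullg, of cv] z0B1 by blast
  have zsX: "zs \<in> X" using zs B1X by blast
  have zsS: "zs \<in> S" using zsX by (simp add: X_def)
  have zsmax: "\<forall>x\<in>X. cv \<bullet> x \<le> cv \<bullet> zs" using z0 zs(2) z0B1 by force
  have "NN A (T1 A y zs \<union> T0 A zs) \<subseteq> {0}"
    using dirs_box[of lo' A y hi' zs] zs(3) by (auto simp: lo'_def hi'_def min_def max_def)
  then have vert: "NN A (T1 A y zs \<union> T0 A zs) = {0}" by (auto simp: NN_def)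
  show ?thesis
  proof (cases "dim (NN A (T1 A y zs)) \<le> d")
    case True
    then show ?thesis using zsX by (auto simp: X_def S_def k_def)
  next
    case False
    define Ot where "Ot = T1 A y zs"
    define Zr where "Zr = T0 A zs"
    have dO: "dim (NN A Ot) > d" using False by (simp add: Ot_def)
    define hw where "hw = (\<Sum>i\<in>Zr. (A$i \<bullet> y) *\<^sub>R A$i) - (\<Sum>i\<in>Ot. (A$i \<bullet> y) *\<^sub>R A$i)"
    define h0 where "h0 = (\<Sum>i\<in>Ot. (A$i \<bullet> y) * (A$i \<bullet> y))"
    define h where "h x = hw \<bullet> x + h0" for x
    have h_eq: "h x = (\<Sum>i\<in>Ot. (A$i \<bullet> y) * (A$i \<bullet> y) - (A$i \<bullet> y) * (A$i \<bullet> x)) + (\<Sum>i\<in>Zr. (A$i \<bullet> y) * (A$i \<bullet> x))" for x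
      by (simp add: h_def hw_def h0_def inner_diff_left inner_sum_left sum_subtractf)
    have h_nonneg: "h x \<ge> 0" if "x \<in> S" for x
    proof -
      have "(\<Sum>i\<in>Ot. (A$i \<bullet> y) * (A$i \<bullet> y) - (A$i \<bullet> y) * (A$i \<bullet> x)) \<ge> 0"
        using SP_term(2)[of x A y] that by (intro sum_nonneg) (simp add: S_def)
      moreover have "(\<Sum>i\<in>Zr. (A$i \<bullet> y) * (A$i \<bullet> x)) \<ge> 0"
        using SP_term(1)[of x A y] that by (intro sum_nonneg) (simp add: S_def)
      ultimately show ?thesis by (simp add: h_eq)
    qed
    have h_zero: "x = zs" if "x \<in> S" "h x = 0" for x
    proof -
      have n1: "(\<Sum>i\<in>Ot. (A$i \<bullet> y) * (A$i \<bullet> y) - (A$i \<bullet> y) * (A$i \<bullet> x)) \<ge> 0"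
        using SP_term(2)[of x A y] that by (intro sum_nonneg) (simp add: S_def)
      have n2: "(\<Sum>i\<in>Zr. (A$i \<bullet> y) * (A$i \<bullet> x)) \<ge> 0"
        using SP_term(1)[of x A y] that by (intro sum_nonneg) (simp add: S_def)
      have s1: "(\<Sum>i\<in>Ot. (A$i \<bullet> y) * (A$i \<bullet> y) - (A$i \<bullet> y) * (A$i \<bullet> x)) = 0"
        and s2: "(\<Sum>i\<in>Zr. (A$i \<bullet> y) * (A$i \<bullet> x)) = 0"
        using n1 n2 that(2) h_eq[of x] by linarith+
      have "x - zs \<in> NN A (Ot \<union> Zr)"
        unfolding NN_def mem_Collect_eq
      proof (intro ballI)
        fix i assume i: "i \<in> Ot \<union> Zr"
        have xS: "x \<in> SP A y" using that by (simp add: S_def)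
        show "A$i \<bullet> (x - zs) = 0"
        proof (cases "i \<in> Ot")
          case True
          have "\<forall>j\<in>Ot. (A$j \<bullet> y) * (A$j \<bullet> y) - (A$j \<bullet> y) * (A$j \<bullet> x) = 0"
            using sum_nonneg_eq_0_iff[of Ot "\<lambda>j. (A$j \<bullet> y) * (A$j \<bullet> y) - (A$j \<bullet> y) * (A$j \<bullet> x)"] s1 SP_term(2)[OF xS] by simp
          then have "(A$i \<bullet> y) * (A$i \<bullet> y) - (A$i \<bullet> y) * (A$i \<bullet> x) = 0" using True by blast
          then have "(A$i \<bullet> y) * (A$i \<bullet> y - A$i \<bullet> x) = 0" by (simp add: algebra_simps)
          then have "A$i \<bullet> x = A$i \<bullet> y" using SP_term(3)[OF xS] by auto
          then show ?thesis using True by (simp add: Ot_def T1_def inner_diff_right)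
        next
          case False
          then have iZ: "i \<in> Zr" using i by simp
          have "\<forall>j\<in>Zr. (A$j \<bullet> y) * (A$j \<bullet> x) = 0"
            using sum_nonneg_eq_0_iff[of Zr "\<lambda>j. (A$j \<bullet> y) * (A$j \<bullet> x)"] s2 SP_term(1)[OF xS] by simp
          then have "(A$i \<bullet> y) * (A$i \<bullet> x) = 0" using iZ by blast
          then have "A$i \<bullet> x = 0" using SP_term(3)[OF xS] by auto
          then show ?thesis using iZ by (simp add: Zr_def T0_def inner_diff_right)
        qed
      qed
      then show ?thesis using vert by (simp add: Ot_def Zr_def)
    qed
    have h_zs: "h zs = 0"
      by (simp add: h_eq Ot_def Zr_def T1_def T0_def)
    define V where "V = {x\<in>S. \<exists>i. (A$i \<bullet> x = A$i \<bullet> y \<and> i \<notin> Ot) \<or> (A$i \<bullet> x = 0 \<and> i \<notin> Zr)}"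
    have Veq: "V = S \<inter> ((\<Union>i\<in>-Ot. {x. A$i \<bullet> x = A$i \<bullet> y}) \<union> (\<Union>i\<in>-Zr. {x. A$i \<bullet> x = 0}))"
      by (auto simp: V_def)
    have Vcpt: "compact V" unfolding Veq
      using Scpt by (intro compact_Int_closed closed_Un closed_UN) (auto simp: closed_hyperplane)
    have zsV: "zs \<notin> V" by (auto simp: V_def Ot_def Zr_def T1_def T0_def)
    have contH: "continuous_on U h" for U unfolding h_def by (intro continuous_intros)
    obtain \<epsilon> where \<epsilon>: "\<epsilon> > 0" "\<And>x. x \<in> S \<Longrightarrow> h x \<le> \<epsilon> \<Longrightarrow> x \<notin> V"
    proof (cases "V = {}")
      case True
      then show ?thesis using that[of 1] by auto
    next
      case False
      obtain v0 where v0: "v0 \<in> V" "\<forall>x\<in>V. h v0 \<le> h x"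
        using continuous_attains_inf[OF Vcpt False contH] by blast
      have v0S: "v0 \<in> S" using v0 by (simp add: V_def)
      have "h v0 \<noteq> 0" using h_zero[OF v0S] v0 zsV by blast
      then have hv0: "h v0 > 0" using h_nonneg[OF v0S] by simp
      show ?thesis
      proof (rule that[of "h v0 / 2"])
        show "h v0 / 2 > 0" using hv0 by simp
        fix x assume "x \<in> S" "h x \<le> h v0 / 2"
        then show "x \<notin> V" using v0 hv0 by force
      qed
    qed
    have close: "T1 A y x \<subseteq> Ot \<and> T0 A x \<subseteq> Zr" if "x \<in> S" "h x \<le> \<epsilon>" for x
      using \<epsilon>(2)[OF that] that(1) by (auto simp: V_def T1_def T0_def)
    define lo where "lo i = min 0 (A$i \<bullet> y)" for i
    define hi where "hi i = max 0 (A$i \<bullet> y)" for i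
    define g' where "g' j = (case j of None \<Rightarrow> hw | Some j' \<Rightarrow> gB A j')" for j
    define b' where "b' j = (case j of None \<Rightarrow> \<epsilon> - h0 | Some j' \<Rightarrow> bB lo hi j')" for j
    have Ceq: "polyP g' b' = {x\<in>S. h x \<le> \<epsilon>}"
    proof -
      have "(\<forall>j. g' j \<bullet> x \<le> b' j) \<longleftrightarrow> hw \<bullet> x \<le> \<epsilon> - h0 \<and> (\<forall>j'. gB A j' \<bullet> x \<le> bB lo hi j')" for x
        by (metis (no_types, lifting) b'_def g'_def option.exhaust option.simps(4) option.simps(5))
      moreover have "S = polyP (gB A) (bB lo hi)" unfolding S_def SP_box lo_def hi_def ..
      ultimately show ?thesis
        by (auto simp: polyP_def h_def)
    qed
    have Cdirs: "NN A (T1 A y x \<union> T0 A x) \<inter> {u. h x = \<epsilon> \<longrightarrow> hw \<bullet> u = 0} \<subseteq> dirsP g' b' x" for x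
    proof
      fix u assume u: "u \<in> NN A (T1 A y x \<union> T0 A x) \<inter> {u. h x = \<epsilon> \<longrightarrow> hw \<bullet> u = 0}"
      have ub: "u \<in> dirsP (gB A) (bB lo hi) x"
      proof -
        have "\<forall>i. lo i \<in> {0, A$i \<bullet> y} \<and> hi i \<in> {0, A$i \<bullet> y}" by (simp add: lo_def hi_def min_def max_def)
        then show ?thesis using dirs_box[of lo A y hi x] u by blast
      qed
      show "u \<in> dirsP g' b' x"
        unfolding dirsP_def
      proof (intro CollectI allI impI)
        fix j assume t: "g' j \<bullet> x = b' j"
        show "g' j \<bullet> u = 0"
        proof (cases j)
          case None
          then have "h x = \<epsilon>" using t by (simp add: g'_def b'_def h_def)
          then show ?thesis using u None by (simp add: g'_def)
        next
          case (Some j')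
          then have "gB A j' \<bullet> x = bB lo hi j'" using t by (simp add: g'_def b'_def)
          then have "gB A j' \<bullet> u = 0" using ub unfolding dirsP_def by blast
          then show ?thesis using Some by (simp add: g'_def)
        qed
      qed
    qed
    have fullg': "u = 0" if "\<forall>j. g' j \<bullet> u = 0" for u
      using fullg[of u] that[rule_format, of "Some _"] by (simp add: g'_def)
    have Cbd: "bounded (polyP g' b')"
      using Ceq Scpt compact_imp_bounded bounded_subset by (metis (no_types, lifting) mem_Collect_eq subsetI)
    have zsC: "zs \<in> polyP g' b'" using Ceq zsS h_zs \<epsilon>(1) by simp
    obtain w where w: "w \<in> polyP g' b'" "\<forall>z\<in>polyP g' b'. cv \<bullet> z \<le> cv \<bullet> w" "dirsP g' b' w = {0}"
      using vertex_max[OF Cbd _ fullg', of cv] zsC by blast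
    have wS: "w \<in> S" and hw_le: "h w \<le> \<epsilon>" using w(1) Ceq by auto
    have wcl: "T1 A y w \<subseteq> Ot" "T0 A w \<subseteq> Zr" using close[OF wS hw_le] by auto
    define U where "U = NN A (T1 A y w \<union> T0 A w)"
    have Usub: "U \<inter> {u. h w = \<epsilon> \<longrightarrow> hw \<bullet> u = 0} \<subseteq> {0}"
      using Cdirs[of w] w(3) by (simp add: U_def)
    have dU: "dim U \<le> 1"
    proof (cases "h w = \<epsilon>")
      case True
      then have "U \<inter> {u. hw \<bullet> u = 0} \<subseteq> {0}" using Usub by simp
      then show ?thesis using dim_le1[of U hw] subspace_NN[of A "T1 A y w \<union> T0 A w"] by (simp add: U_def)
    next
      case False
      then have "U \<subseteq> {0}" using Usub by simp
      then show ?thesis by (metis dim_eq_0 le_numeral_extra(1) zero_le)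
    qed
    define N1 where "N1 = NN A (T1 A y w)"
    define N0 where "N0 = NN A (T0 A w)"
    have "NN A Ot \<subseteq> N1" using wcl by (simp add: N1_def NN_anti)
    then have dN1: "dim N1 > d" using dO dim_subset[of "NN A Ot" N1] by linarith
    have sums: "dim {a + b |a b. a \<in> N1 \<and> b \<in> N0} + dim (N1 \<inter> N0) = dim N1 + dim N0"
      by (rule dim_sums_Int) (simp_all add: N1_def N0_def subspace_NN)
    have "{a + b |a b. a \<in> N1 \<and> b \<in> N0} \<subseteq> NN A (T0 A y)"
    proof -
      have "N1 \<subseteq> NN A (T0 A y)" "N0 \<subseteq> NN A (T0 A y)"
        using ES[OF wS] by (auto simp: N1_def N0_def intro!: NN_anti)
      then show ?thesis using subspace_NN[of A "T0 A y"] by (auto intro: subspace_add)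
    qed
    then have "dim {a + b |a b. a \<in> N1 \<and> b \<in> N0} \<le> k" by (simp add: k_def dim_subset)
    moreover have "dim (N1 \<inter> N0) \<le> 1" using dU by (simp add: N1_def N0_def U_def NN_Un)
    ultimately have "dim N0 + d \<le> k" using sums dN1 by linarith
    then have wX: "w \<in> X" using wS by (simp add: X_def N0_def)
    have cw: "cv \<bullet> w \<le> cv \<bullet> zs" using zsmax wX by blast
    have cy: "cv \<bullet> zs < cv \<bullet> y"
    proof (rule ccontr)
      assume "\<not> cv \<bullet> zs < cv \<bullet> y"
      then have le0: "(\<Sum>i\<in>UNIV. (A$i \<bullet> y) * (A$i \<bullet> y) - (A$i \<bullet> y) * (A$i \<bullet> zs)) \<le> 0"
        by (simp add: cv_eq sum_subtractf)
      have zsS': "zs \<in> SP A y" using zsS by (simp add: S_def)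
      have nn: "\<forall>i\<in>UNIV. (A$i \<bullet> y) * (A$i \<bullet> y) - (A$i \<bullet> y) * (A$i \<bullet> zs) \<ge> 0"
        using SP_term(2)[OF zsS'] by simp
      define f where "f i = (A$i \<bullet> y) * (A$i \<bullet> y) - (A$i \<bullet> y) * (A$i \<bullet> zs)" for i
      have nnf: "\<And>i. i \<in> UNIV \<Longrightarrow> 0 \<le> f i" using nn by (simp add: f_def)
      have "sum f UNIV \<le> 0" using le0 by (simp add: f_def)
      moreover have "sum f UNIV \<ge> 0" using nnf by (rule sum_nonneg)
      ultimately have "sum f UNIV = 0" by linarith
      then have allf: "\<forall>i\<in>UNIV. f i = 0" using sum_nonneg_eq_0_iff[of UNIV f] nnf by simp
      have "A$i \<bullet> zs = A$i \<bullet> y" for i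
      proof -
        have "(A$i \<bullet> y) * (A$i \<bullet> y - A$i \<bullet> zs) = 0" using allf by (simp add: f_def algebra_simps)
        then show ?thesis using SP_term(3)[OF zsS', of i] by auto
      qed
      then have "\<forall>i. A$i \<bullet> zs = A$i \<bullet> y" by blast
      then have "Ot = UNIV" by (auto simp: Ot_def T1_def)
      then have "NN A Ot = {0}" using NN_UNIV[OF r] by simp
      then show False using dO by simp
    qed
    have hy: "h y \<ge> 0" using h_nonneg[of y] by (simp add: S_def SP_def)
    define t where "t = \<epsilon> / (h y + \<epsilon>)"
    have t0: "t > 0" and t1: "t \<le> 1" using \<epsilon>(1) hy by (auto simp: t_def)
    have tle: "t * h y \<le> \<epsilon>"
    proof -
      have "t * h y = \<epsilon> * (h y / (h y + \<epsilon>))" by (simp add: t_def)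
      also have "\<dots> \<le> \<epsilon> * 1" using \<epsilon>(1) hy by (intro mult_left_mono) auto
      finally show ?thesis by simp
    qed
    define q where "q = zs + t *\<^sub>R (y - zs)"
    have qeq: "q = (1 - t) *\<^sub>R zs + t *\<^sub>R y" by (simp add: q_def algebra_simps)
    have yS: "y \<in> S" by (simp add: S_def SP_def min_def max_def)
    have qS: "q \<in> S" unfolding qeq using Sconv zsS yS t0 t1 by (simp add: convex_def)
    have hq: "h q = h zs + t * (h y - h zs)" by (simp add: h_def q_def inner_add_right inner_diff_right algebra_simps)
    have "h q \<le> \<epsilon>" using hq h_zs tle by simp
    then have qC: "q \<in> polyP g' b'" using Ceq qS by simp
    have "cv \<bullet> q = cv \<bullet> zs + t * (cv \<bullet> y - cv \<bullet> zs)" by (simp add: q_def inner_add_right inner_diff_right)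
    then have "cv \<bullet> q > cv \<bullet> zs" using t0 cy by simp
    moreover have "cv \<bullet> q \<le> cv \<bullet> w" using w(2) qC by blast
    ultimately show ?thesis using cw by simp
  qed
qed


lemma face_top:
  fixes A :: "real^'n^'m"
  shows "{x\<in>SP A y. \<forall>i\<in>T. A$i \<bullet> x = A$i \<bullet> y} face_of SP A y"
proof -
  define w where "w = (\<Sum>i\<in>T. (A$i \<bullet> y) *\<^sub>R A$i)"
  define b where "b = (\<Sum>i\<in>T. (A$i \<bullet> y) * (A$i \<bullet> y))"
  have weq: "w \<bullet> x = (\<Sum>i\<in>T. (A$i \<bullet> y) * (A$i \<bullet> x))" for x by (simp add: w_def inner_sum_left)
  have le: "w \<bullet> x \<le> b" if "x \<in> SP A y" for x
    unfolding weq b_def using SP_term(2)[OF that] by (intro sum_mono) auto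
  have "{x\<in>SP A y. \<forall>i\<in>T. A$i \<bullet> x = A$i \<bullet> y} = SP A y \<inter> {x. w \<bullet> x = b}"
  proof (intro equalityI subsetI)
    fix x assume "x \<in> {x\<in>SP A y. \<forall>i\<in>T. A$i \<bullet> x = A$i \<bullet> y}"
    then show "x \<in> SP A y \<inter> {x. w \<bullet> x = b}" by (simp add: weq b_def)
  next
    fix x assume x: "x \<in> SP A y \<inter> {x. w \<bullet> x = b}"
    then have xS: "x \<in> SP A y" by simp
    define f where "f i = (A$i \<bullet> y) * (A$i \<bullet> y) - (A$i \<bullet> y) * (A$i \<bullet> x)" for i
    have nnf: "\<And>i. i \<in> T \<Longrightarrow> 0 \<le> f i" using SP_term(2)[OF xS] by (simp add: f_def)
    have "sum f T = 0" using x by (simp add: f_def sum_subtractf weq b_def)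
    then have allf: "\<forall>i\<in>T. f i = 0" using sum_nonneg_eq_0_iff[of T f] nnf by simp
    have "A$i \<bullet> x = A$i \<bullet> y" if "i \<in> T" for i
    proof -
      have "(A$i \<bullet> y) * (A$i \<bullet> y - A$i \<bullet> x) = 0" using allf that by (simp add: f_def algebra_simps)
      then show ?thesis using SP_term(3)[OF xS, of i] by auto
    qed
    then show "x \<in> {x\<in>SP A y. \<forall>i\<in>T. A$i \<bullet> x = A$i \<bullet> y}" using xS by simp
  qed
  then show ?thesis using face_of_Int_supporting_hyperplane_le[OF SP_convex le] by simp
qed

lemma face_bot:
  fixes A :: "real^'n^'m"
  shows "{x\<in>SP A y. \<forall>i\<in>T. A$i \<bullet> x = 0} face_of SP A y"
proof -
  define w where "w = (\<Sum>i\<in>T. (A$i \<bullet> y) *\<^sub>R A$i)"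
  have weq: "w \<bullet> x = (\<Sum>i\<in>T. (A$i \<bullet> y) * (A$i \<bullet> x))" for x by (simp add: w_def inner_sum_left)
  have ge: "w \<bullet> x \<ge> 0" if "x \<in> SP A y" for x
    unfolding weq using SP_term(1)[OF that] by (intro sum_nonneg) auto
  have "{x\<in>SP A y. \<forall>i\<in>T. A$i \<bullet> x = 0} = SP A y \<inter> {x. w \<bullet> x = 0}"
  proof (intro equalityI subsetI)
    fix x assume "x \<in> {x\<in>SP A y. \<forall>i\<in>T. A$i \<bullet> x = 0}"
    then show "x \<in> SP A y \<inter> {x. w \<bullet> x = 0}" by (simp add: weq)
  next
    fix x assume x: "x \<in> SP A y \<inter> {x. w \<bullet> x = 0}"
    then have xS: "x \<in> SP A y" by simp
    define f where "f i = (A$i \<bullet> y) * (A$i \<bullet> x)" for i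
    have nnf: "\<And>i. i \<in> T \<Longrightarrow> 0 \<le> f i" using SP_term(1)[OF xS] by (simp add: f_def)
    have "sum f T = 0" using x by (simp add: f_def weq)
    then have allf: "\<forall>i\<in>T. f i = 0" using sum_nonneg_eq_0_iff[of T f] nnf by simp
    have "A$i \<bullet> x = 0" if "i \<in> T" for i
      using allf that SP_term(3)[OF xS, of i] by (auto simp: f_def)
    then show "x \<in> {x\<in>SP A y. \<forall>i\<in>T. A$i \<bullet> x = 0}" using xS by simp
  qed
  then show ?thesis using face_of_Int_supporting_hyperplane_ge[OF SP_convex ge] by simp
qed

theorem lemma6:
  fixes A :: "real^'n^'m" and xs ys :: "real^'n" and d :: int
  assumes "\<forall>i j. A$i$j \<in> \<int>"
    and "rank A = CARD('n)"
    and "ys \<in> spindle A xs"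
    and "1 \<le> d" and "d \<le> aff_dim (spindle A ys)"
  shows "\<exists>F G. F face_of spindle A ys \<and> aff_dim F = d \<and> ys \<in> F
            \<and> G face_of spindle A ys \<and> aff_dim G = aff_dim (spindle A ys) - d \<and> 0 \<in> G
            \<and> F \<inter> G \<noteq> {}"
proof -
  have r: "rank A = CARD('n)" by (rule assms(2))
  define S where "S = spindle A ys"
  have SSP: "S = SP A ys" by (simp add: S_def spindle_eq)
  define k where "k = dim (NN A (T0 A ys))"
  have affS: "aff_dim S = int k" using SP_aff_dim[of A ys] by (simp add: SSP k_def)
  define dn where "dn = nat d"
  have ddn: "d = int dn" using assms(4) by (simp add: dn_def)
  have dnk: "dn \<le> k" using assms(5) affS ddn by (simp add: S_def)
  obtain p where p: "p \<in> SP A ys" "dim (NN A (T1 A ys p)) \<le> dn" "dim (NN A (T0 A p)) + dn \<le> k"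
    using core[OF r dnk[unfolded k_def]] by (auto simp: k_def)
  have polyS: "polytope S" unfolding SSP polytope_eq_bounded_polyhedron
    using SP_polyhedron SP_bounded[OF r] by blast
  define F0 where "F0 = {x\<in>SP A ys. \<forall>i\<in>T1 A ys p. A$i \<bullet> x = A$i \<bullet> ys}"
  define G0 where "G0 = {x\<in>SP A ys. \<forall>i\<in>T0 A p. A$i \<bullet> x = 0}"
  have F0f: "F0 face_of S" unfolding F0_def SSP by (rule face_top)
  have G0f: "G0 face_of S" unfolding G0_def SSP by (rule face_bot)
  have ysS: "ys \<in> SP A ys" by (simp add: SP_def min_def max_def)
  have zS: "0 \<in> SP A ys" by (simp add: SP_def)
  have ysF0: "ys \<in> F0" using ysS by (simp add: F0_def)
  have pF0: "p \<in> F0" using p(1) by (simp add: F0_def T1_def)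
  have zG0: "0 \<in> G0" using zS by (simp add: G0_def)
  have pG0: "p \<in> G0" using p(1) by (simp add: G0_def T0_def)
  have "F0 \<subseteq> (+) ys ` NN A (T1 A ys p)"
  proof
    fix x assume x: "x \<in> F0"
    have "x - ys \<in> NN A (T1 A ys p)" using x by (simp add: F0_def NN_def inner_diff_right)
    then show "x \<in> (+) ys ` NN A (T1 A ys p)" by (metis add.commute diff_add_cancel image_eqI)
  qed
  then have "aff_dim F0 \<le> aff_dim ((+) ys ` NN A (T1 A ys p))" by (rule aff_dim_subset)
  also have "\<dots> = int (dim (NN A (T1 A ys p)))"
    by (simp add: aff_dim_translation_eq aff_dim_subspace subspace_NN)
  finally have aF0: "aff_dim F0 \<le> d" using p(2) ddn by linarith
  have "G0 \<subseteq> NN A (T0 A p)" by (auto simp: G0_def NN_def)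
  then have "aff_dim G0 \<le> int (dim (NN A (T0 A p)))"
    using aff_dim_subset aff_dim_subspace[OF subspace_NN[of A "T0 A p"]] by metis
  then have aG0: "aff_dim G0 \<le> aff_dim S - d" using p(3) ddn affS by linarith
  obtain F where F: "F face_of S" "F0 \<subseteq> F" "aff_dim F = d"
    using face_enlarge[OF polyS F0f _ aF0] ysF0 assms(5) by (auto simp: S_def)
  obtain G where G: "G face_of S" "G0 \<subseteq> G" "aff_dim G = aff_dim S - d"
    using face_enlarge[OF polyS G0f _ aG0] zG0 assms(4) by auto
  show ?thesis
    using F G ysF0 pF0 zG0 pG0 unfolding S_def by blast
qed

end
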